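(* Let $A\in\mathbb{R}^{n\times n}$, $B\in\mathbb{R}^{n\times m}$ with $(A,B)$ controllable, and let $T>0$. Then the pair $\big(A_{d,T},\,[B_{d,T}\ \ B_{i,T}]\big)$ is controllable if and only if $$\ker\begin{bmatrix} A_{d,T}^\top-e^{\mu T}I\\ (\widetilde{A}_{T}B)^\top\\ B^\top\end{bmatrix}=\{0\}\quad(\text{kernel taken in }\mathbb{C}^n)$$ for every $\mu$ in the set $\{\lambda\in\sigma(A)\ :\ \exists\,(\ell,\gamma)\in\mathbb{Z}\times(\sigma(A)\setminus\{\lambda\})\text{ such that }(\lambda-\gamma)T=2i\pi\ell\}$. (If this set is empty, the pair is controllable.)
   Context: For $T>0$ define $\widetilde{A}_T:=\int_0^T e^{A\tau}\,d\tau$, $A_{d,T}:=e^{AT}$, $B_{d,T}:=\widetilde{A}_T B$, $B_{i,T}:=A_{d,T}B$. These are the matrices of the exact discretization $x_{k+1}=A_{d,T}x_k+B_{d,T}u_{c_k}+B_{i,T}u_{i_k}$ of $\dot x=Ax+Bu$ under the input $u(t)=u_{c_k}+\delta(t-kT)u_{i_k}$ on $[kT,(k+1)T)$. $\sigma(A)$ denotes the spectrum of $A$ and $I$ the identity matrix. *)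

theory Defs
  imports "HOL-Analysis.Analysis"
begin

text \<open>Matrices are HOL-Analysis Cartesian matrices: a real n x m matrix has type
  real^'m^'n (rows indexed by 'n). Note that the built-in multiplication on vectors
  is componentwise, so powers and the exponential of a matrix are defined here using
  the matrix product.\<close>

primrec matpow :: "real^'n^'n \<Rightarrow> nat \<Rightarrow> real^'n^'n" where
  "matpow A 0 = mat 1"
| "matpow A (Suc k) = A ** matpow A k"

definition mexp :: "real^'n^'n \<Rightarrow> real^'n^'n" where
  "mexp M = (\<Sum>k. (1 / fact k) *\<^sub>R matpow M k)"

definition Atil :: "real^'n^'n \<Rightarrow> real \<Rightarrow> real^'n^'n" where
  "Atil A T = integral {0..T} (\<lambda>\<tau>. mexp (\<tau> *\<^sub>R A))"

definition Ad :: "real^'n^'n \<Rightarrow> real \<Rightarrow> real^'n^'n" where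
  "Ad A T = mexp (T *\<^sub>R A)"

definition Bd :: "real^'n^'n \<Rightarrow> real^'m^'n \<Rightarrow> real \<Rightarrow> real^'m^'n" where
  "Bd A B T = Atil A T ** B"

definition Bi :: "real^'n^'n \<Rightarrow> real^'m^'n \<Rightarrow> real \<Rightarrow> real^'m^'n" where
  "Bi A B T = Ad A T ** B"

definition controllable :: "real^'n^'n \<Rightarrow> real^'m^'n \<Rightarrow> bool" where
  "controllable A B \<longleftrightarrow>
     span {matpow A k *v (B *v u) | k u. k < CARD('n)} = (UNIV :: (real^'n) set)"

definition hcat :: "'a^'m^'n \<Rightarrow> 'a^'p^'n \<Rightarrow> 'a^('m + 'p)^'n" where
  "hcat B1 B2 = (\<chi> i j. case j of Inl a \<Rightarrow> B1 $ i $ a | Inr b \<Rightarrow> B2 $ i $ b)"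

definition vcat :: "'a^'n^'r \<Rightarrow> 'a^'n^'s \<Rightarrow> 'a^'n^('r + 's)" where
  "vcat M1 M2 = (\<chi> i. case i of Inl a \<Rightarrow> M1 $ a | Inr b \<Rightarrow> M2 $ b)"

definition cmat :: "real^'m^'n \<Rightarrow> complex^'m^'n" where
  "cmat M = (\<chi> i j. complex_of_real (M $ i $ j))"

definition spec :: "real^'n^'n \<Rightarrow> complex set" where
  "spec A = {c. \<exists>v :: complex^'n. v \<noteq> 0 \<and> cmat A *v v = c *s v}"

end

theory Submission
  imports Defs "HOL-Computational_Algebra.Fundamental_Theorem_Algebra"
begin

lemma mv_add: "(X::'a::comm_ring_1^'m^'n) *v (x + y) = X *v x + X *v y"
  by (simp add: matrix_vector_mult_def vec_eq_iff sum.distrib algebra_simps)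
lemma mv_diff: "(X::'a::comm_ring_1^'m^'n) *v (x - y) = X *v x - X *v y"
  by (simp add: matrix_vector_mult_def vec_eq_iff sum_subtractf algebra_simps)
lemma mv_smult: "(X::'a::comm_ring_1^'m^'n) *v (c *s x) = c *s (X *v x)"
  by (simp add: matrix_vector_mult_def vec_eq_iff sum_distrib_left algebra_simps)
lemma mv_zero: "(X::'a::comm_ring_1^'m^'n) *v 0 = 0"
  by (simp add: matrix_vector_mult_def vec_eq_iff)
lemma mv_sum: "(X::'a::comm_ring_1^'m^'n) *v (\<Sum>i\<in>S. f i) = (\<Sum>i\<in>S. X *v f i)"
  by (induction S rule: infinite_finite_induct) (auto simp: mv_add mv_zero)
lemma mat_mv: "mat c *v (x::'a::comm_ring_1^'n) = c *s x"
proof -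
  have e: "(if P then c else 0) * y = (if P then c * y else 0)" for P and y :: 'a by simp
  have "(mat c *v x) $ i = c * x $ i" for i
    by (simp add: matrix_vector_mult_def mat_def e sum.delta)
  then show ?thesis by (simp add: vec_eq_iff)
qed
lemma mv_minus_mat: "((X::'a::comm_ring_1^'n^'n) - mat c) *v x = X *v x - c *s x"
  by (simp add: matrix_vector_mult_diff_rdistrib mat_mv)
lemma vsmult_sum: "(c::'a::comm_ring_1) *s (\<Sum>i\<in>S. f i) = (\<Sum>i\<in>S. c *s f i)"
  by (simp add: vec_eq_iff sum_distrib_left)
lemma smult_cancel_vec:
  fixes u :: "'a::field^'n"
  assumes "a *s u = b *s u" "u \<noteq> 0" shows "a = b"
proof -
  obtain i where "u $ i \<noteq> 0" using assms(2) by (auto simp: vec_eq_iff)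
  moreover have "a * u$i = b * u$i" using assms(1) by (auto simp: vec_eq_iff)
  ultimately show ?thesis by simp
qed

definition pe :: "'a::comm_ring_1^'n^'n \<Rightarrow> 'a poly \<Rightarrow> 'a^'n \<Rightarrow> 'a^'n" where
  "pe M q w = (\<Sum>j<Suc (degree q). coeff q j *s (((*v) M) ^^ j) w)"

lemma pe_bound:
  assumes "degree q < N"
  shows "pe M q w = (\<Sum>j<N. coeff q j *s (((*v) M) ^^ j) w)"
  unfolding pe_def
  by (rule sum.mono_neutral_left) (use assms in \<open>auto simp: coeff_eq_0\<close>)

lemma pe_add: "pe M (p + q) w = pe M p w + pe M q w"
proof -
  let ?N = "Suc (degree p + degree q)"
  have "degree (p+q) < ?N" using degree_add_le_max[of p q] by linarith
  then show ?thesis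
    by (simp add: pe_bound[of _ ?N] algebra_simps sum.distrib vector_sadd_rdistrib)
qed

lemma pe_smult: "pe M (smult c q) w = c *s pe M q w"
proof -
  have "degree (smult c q) < Suc (degree q)" using degree_smult_le[of c q] by linarith
  then show ?thesis
    by (simp only: pe_bound[of _ "Suc (degree q)"] coeff_smult vsmult_sum vector_smult_assoc)
qed

lemma pe_one: "pe M 1 w = w"
  by (simp add: pe_def)

lemma pe_pCons0: "pe M (pCons 0 q) w = M *v pe M q w"
proof -
  let ?N = "Suc (Suc (degree q))"
  have d: "degree (pCons 0 q) < ?N" by (cases "q = 0") auto
  have "pe M (pCons 0 q) w = (\<Sum>j<?N. coeff (pCons 0 q) j *s (((*v) M) ^^ j) w)"
    by (rule pe_bound[OF d])
  also have "\<dots> = (\<Sum>j<Suc (degree q). coeff q j *s (((*v) M) ^^ Suc j) w)"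
    by (subst sum.lessThan_Suc_shift) simp
  also have "\<dots> = M *v pe M q w"
    unfolding pe_def mv_sum by (simp only: mv_smult funpow.simps o_apply)
  finally show ?thesis .
qed

lemma linfactor: "[:-r, 1:] * (q::'a::comm_ring_1 poly) = smult (-r) q + pCons 0 q"
  by (simp add: smult_one)

lemma pe_linfactor: "pe M (q * [:-r, 1:]) w = M *v pe M q w - r *s pe M q w"
  by (simp only: mult.commute[of q] linfactor pe_add pe_smult pe_pCons0) 
     (simp add: vec_eq_iff)

lemma sum_in_U:
  assumes "0 \<in> U" "\<And>x y. x\<in>U \<Longrightarrow> y\<in>U \<Longrightarrow> x+y\<in>U" "\<And>j. j \<in> S \<Longrightarrow> f j \<in> U"
  shows "sum f S \<in> U"
  using assms(3)
  by (induction S rule: infinite_finite_induct) (auto simp: assms(1,2))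

lemma ofreal_smult: "complex_of_real r *s (v::complex^'n) = r *\<^sub>R v"
  unfolding vec_eq_iff vector_smult_component vector_scaleR_component by (simp add: scaleR_conv_of_real)

lemma eig_exists:
  fixes M :: "complex^'n^'n" and U :: "(complex^'n) set"
  assumes u0: "u0 \<in> U" "u0 \<noteq> 0" and U0: "0 \<in> U"
    and Uadd: "\<And>x y. x\<in>U \<Longrightarrow> y\<in>U \<Longrightarrow> x+y\<in>U"
    and Usm: "\<And>c x. x\<in>U \<Longrightarrow> c *s x \<in> U" and UM: "\<And>x. x\<in>U \<Longrightarrow> M *v x \<in> U"
  shows "\<exists>u\<in>U. u \<noteq> 0 \<and> (\<exists>c. M *v u = c *s u)"
proof -
  define K where "K j = (((*v) M) ^^ j) u0" for j
  have KU: "K j \<in> U" for j by (induction j) (auto simp: K_def u0 UM)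
  have peU: "pe M q u0 \<in> U" for q
    unfolding pe_def by (rule sum_in_U[OF U0 Uadd]) (auto intro: Usm KU simp: K_def[symmetric])
  define N where "N = Suc (2 * CARD('n))"
  obtain a :: "nat \<Rightarrow> real" where a: "\<exists>j<N. a j \<noteq> 0" "(\<Sum>j<N. a j *\<^sub>R K j) = 0"
  proof (cases "inj_on K {..<N}")
    case True
    then have cardX: "card (K ` {..<N}) = N" by (simp add: card_image)
    have "\<not> independent (K ` {..<N})"
    proof
      assume "independent (K ` {..<N})"
      from independent_bound[OF this] cardX show False by (simp add: N_def)
    qed
    then obtain u where u: "\<exists>v\<in>K ` {..<N}. u v \<noteq> 0" "(\<Sum>v\<in>K ` {..<N}. u v *\<^sub>R v) = 0"
      using dependent_finite[of "K ` {..<N}"] by auto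
    show ?thesis
    proof (rule that[of "\<lambda>j. u (K j)"])
      show "\<exists>j<N. u (K j) \<noteq> 0" using u(1) by auto
      show "(\<Sum>j<N. u (K j) *\<^sub>R K j) = 0" using u(2) sum.reindex[OF True, of "\<lambda>v. u v *\<^sub>R v"] by simp
    qed
  next
    case False
    then obtain i j where ij: "i < N" "j < N" "i \<noteq> j" "K i = K j" by (auto simp: inj_on_def)
    show ?thesis
    proof (rule that[of "\<lambda>t. (if t = i then 1 else 0) - (if t = j then 1 else 0)"])
      show "\<exists>t<N. (if t = i then 1 else 0) - (if t = j then 1 else 0) \<noteq> (0::real)"
        using ij by (intro exI[of _ i]) auto
      have e: "((if t = i then 1 else 0) - (if t = j then 1 else 0)) *\<^sub>R K t
          = (if t = i then K t else 0) - (if t = j then K t else 0)" for t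
        by (simp add: scaleR_diff_left)
      show "(\<Sum>t<N. ((if t = i then 1 else 0) - (if t = j then 1 else 0)) *\<^sub>R K t) = 0"
        unfolding e sum_subtractf using ij by (simp add: sum.delta)
    qed
  qed
  define p where "p = Poly (map (\<lambda>j. complex_of_real (a j)) [0..<N])"
  have cp: "coeff p j = (if j < N then complex_of_real (a j) else 0)" for j
    by (simp add: p_def nth_default_def)
  have p0: "p \<noteq> 0"
  proof
    assume "p = 0"
    with a(1) cp show False by (metis coeff_0 of_real_eq_0_iff)
  qed
  have dp: "degree p < N"
  proof -
    have "degree p \<le> N - 1" by (rule degree_le) (auto simp: cp)
    then show ?thesis by (simp add: N_def)
  qed
  have pe0: "pe M p u0 = 0"
    using a(2) by (simp add: pe_bound[OF dp] cp ofreal_smult K_def[symmetric])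
  obtain root where rt: "smult (lead_coeff p) (\<Prod>i<degree p. [:-root i, 1:]) = p"
    using complex_poly_decompose' by blast
  define Q where "Q k = (\<Prod>i<k. [:-root i, 1:])" for k
  have "lead_coeff p *s pe M (Q (degree p)) u0 = 0"
    using pe0 rt by (metis Q_def pe_smult)
  then have Qd: "pe M (Q (degree p)) u0 = 0"
    using p0 by (simp add: vec_eq_iff)
  have Q0: "pe M (Q 0) u0 = u0" by (simp add: Q_def pe_one)
  obtain k where k: "pe M (Q k) u0 \<noteq> 0" "pe M (Q (Suc k)) u0 = 0"
  proof (rule ccontr)
    assume H: "\<not> thesis"
    have "pe M (Q k) u0 \<noteq> 0" for k
    proof (induction k)
      case 0 then show ?case using Q0 u0 by simp
    next
      case (Suc k) then show ?case using H that by blast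
    qed
    with Qd show False by blast
  qed
  have QS: "Q (Suc k) = Q k * [:-root k, 1:]" by (simp add: Q_def)
  have "M *v pe M (Q k) u0 - root k *s pe M (Q k) u0 = 0"
    using k(2) unfolding QS pe_linfactor .
  then have "M *v pe M (Q k) u0 = root k *s pe M (Q k) u0" by simp
  then show ?thesis using k(1) peU by blast
qed



definition cM :: "real^'m^'n \<Rightarrow> complex^'n^'m" where
  "cM X = transpose (cmat X)"

lemma cMv: "(cM X *v v) $ j = (\<Sum>i\<in>UNIV. complex_of_real (X$i$j) * v$i)"
  by (simp add: cM_def matrix_vector_mult_def transpose_def cmat_def mult.commute)

lemma cM_mult: "cM (X ** Y) *v v = cM Y *v (cM X *v v)"
proof -
  have "(cM (X ** Y) *v v) $ j = (cM Y *v (cM X *v v)) $ j" for j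
  proof -
    have "(cM (X ** Y) *v v) $ j = (\<Sum>i\<in>UNIV. \<Sum>k\<in>UNIV. complex_of_real (X$i$k) * complex_of_real (Y$k$j) * v$i)"
      by (simp add: cMv matrix_matrix_mult_def sum_distrib_right)
    also have "\<dots> = (\<Sum>k\<in>UNIV. \<Sum>i\<in>UNIV. complex_of_real (X$i$k) * complex_of_real (Y$k$j) * v$i)"
      by (rule sum.swap)
    also have "\<dots> = (cM Y *v (cM X *v v)) $ j"
      by (simp add: cMv sum_distrib_left mult_ac)
    finally show ?thesis .
  qed
  then show ?thesis by (simp add: vec_eq_iff)
qed

lemma cM_linear: "linear (\<lambda>X::real^'m^'n. cM X *v v)"
proof -
  have sc: "\<And>(r::real) (c::complex). r *\<^sub>R c = complex_of_real r * c" by (simp add: scaleR_conv_of_real)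
  show ?thesis
  by (intro linearI) (simp_all add: vec_eq_iff cMv sum.distrib distrib_right
        sc sum_distrib_left mult.assoc)
qed

lemma cM_bl: "bounded_linear (\<lambda>X::real^'m^'n. cM X *v v)"
  using cM_linear linear_conv_bounded_linear by blast

definition l1 :: "real^'m^'n \<Rightarrow> real" where
  "l1 X = (\<Sum>i\<in>UNIV. \<Sum>j\<in>UNIV. \<bar>X$i$j\<bar>)"

lemma norm_l1: "norm X \<le> l1 X"
proof -
  have "norm X \<le> (\<Sum>i\<in>UNIV. norm (X$i))" by (simp add: norm_vec_def L2_set_le_sum)
  also have "\<dots> \<le> l1 X" unfolding l1_def by (intro sum_mono norm_le_l1_cart)
  finally show ?thesis .
qed

lemma l1_mult: "l1 ((X::real^'k^'n) ** (Y::real^'m^'k)) \<le> l1 X * l1 Y"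
proof -
  have "l1 (X ** Y) \<le> (\<Sum>i\<in>UNIV. \<Sum>j\<in>UNIV. \<Sum>k\<in>UNIV. \<bar>X$i$k\<bar> * \<bar>Y$k$j\<bar>)"
    unfolding l1_def matrix_matrix_mult_def
    by (intro sum_mono) (auto intro!: order_trans[OF sum_abs] simp: abs_mult)
  also have "\<dots> = (\<Sum>i\<in>UNIV. \<Sum>k\<in>UNIV. \<Sum>j\<in>UNIV. \<bar>X$i$k\<bar> * \<bar>Y$k$j\<bar>)"
    by (intro sum.cong refl sum.swap)
  also have "\<dots> \<le> (\<Sum>i\<in>UNIV. \<Sum>k\<in>UNIV. \<bar>X$i$k\<bar> * l1 Y)"
  proof (intro sum_mono)
    fix i k
    have "(\<Sum>j\<in>UNIV. \<bar>Y$k$j\<bar>) \<le> l1 Y"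
      unfolding l1_def by (rule member_le_sum) auto
    then show "(\<Sum>j\<in>UNIV. \<bar>X$i$k\<bar> * \<bar>Y$k$j\<bar>) \<le> \<bar>X$i$k\<bar> * l1 Y"
      by (simp add: sum_distrib_left[symmetric] mult_left_mono)
  qed
  also have "\<dots> = l1 X * l1 Y" by (simp add: l1_def sum_distrib_right)
  finally show ?thesis .
qed

lemma l1_pow: "l1 (matpow M k) \<le> real CARD('n) * l1 (M::real^'n^'n) ^ k"
proof (induction k)
  case 0
  have e: "(\<Sum>j\<in>UNIV. \<bar>(mat 1 :: real^'n^'n) $ i $ j\<bar>) = 1" for i
  proof -
    have "(\<Sum>j\<in>UNIV. \<bar>(mat 1 :: real^'n^'n) $ i $ j\<bar>) = (\<Sum>j\<in>UNIV. if i = j then 1 else 0)"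
      by (intro sum.cong) (auto simp: mat_def)
    then show ?thesis by simp
  qed
  have "l1 (mat 1 :: real^'n^'n) = real CARD('n)"
    by (simp add: l1_def e)
  then show ?case by simp
next
  case (Suc k)
  have "l1 (matpow M (Suc k)) \<le> l1 M * l1 (matpow M k)" by (simp add: l1_mult)
  also have "\<dots> \<le> l1 M * (real CARD('n) * l1 M ^ k)"
    by (intro mult_left_mono Suc) (simp add: l1_def sum_nonneg)
  finally show ?case by (simp add: mult_ac)
qed

lemma mexp_summable: "summable (\<lambda>k. (1 / fact k) *\<^sub>R matpow (M::real^'n^'n) k)"
proof (rule summable_comparison_test)
  show "\<exists>N. \<forall>k\<ge>N. norm ((1 / fact k) *\<^sub>R matpow M k) \<le> real CARD('n) * (inverse (fact k) * l1 M ^ k)"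
  proof (intro exI allI impI)
    fix k
    have "norm ((1 / fact k) *\<^sub>R matpow M k) = (1 / fact k) * norm (matpow M k)" by simp
    also have "\<dots> \<le> (1 / fact k) * (real CARD('n) * l1 M ^ k)"
      by (intro mult_left_mono order_trans[OF norm_l1 l1_pow]) simp
    finally show "norm ((1 / fact k) *\<^sub>R matpow M k) \<le> real CARD('n) * (inverse (fact k) * l1 M ^ k)"
      by (simp add: field_simps)
  qed
  show "summable (\<lambda>k. real CARD('n) * (inverse (fact k) * l1 M ^ k))"
    by (intro summable_mult summable_exp)
qed

lemma mexp_sums: "(\<lambda>k. (1 / fact k) *\<^sub>R matpow (M::real^'n^'n) k) sums mexp M"
  unfolding mexp_def using mexp_summable by (rule summable_sums)

lemma matpow_scale: "matpow (c *\<^sub>R M) k = c ^ k *\<^sub>R matpow M k"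
  by (induction k) (simp_all add: vec_eq_iff matrix_matrix_mult_def sum_distrib_left mult_ac)

lemma cM_pow: "cM (matpow A k) *v v = (((*v) (cM A)) ^^ k) v"
proof (induction k arbitrary: v)
  case 0
  have "cM (matpow A 0) = mat 1"
    by (simp add: cM_def cmat_def transpose_def mat_def vec_eq_iff)
  then show ?case by (simp add: matrix_vector_mul_lid)
next
  case (Suc k)
  then show ?case by (simp add: cM_mult funpow_swap1)
qed

lemma SE: "(\<lambda>k. (T^k / fact k) *\<^sub>R (((*v) (cM A)) ^^ k) v) sums (cM (Ad A T) *v v)"
proof -
  have "(\<lambda>k. cM ((1 / fact k) *\<^sub>R matpow (T *\<^sub>R A) k) *v v) sums (cM (Ad A T) *v v)"
    unfolding Ad_def by (rule bounded_linear.sums[OF cM_bl mexp_sums])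
  moreover have "cM ((1 / fact k) *\<^sub>R matpow (T *\<^sub>R A) k) *v v = (T^k / fact k) *\<^sub>R (((*v) (cM A)) ^^ k) v" for k
  proof -
    have "cM ((1 / fact k) *\<^sub>R matpow (T *\<^sub>R A) k) *v v = cM ((T^k / fact k) *\<^sub>R matpow A k) *v v"
      by (simp add: matpow_scale)
    also have "\<dots> = (T^k / fact k) *\<^sub>R (cM (matpow A k) *v v)"
      using linear_cmul[OF cM_linear] by blast
    finally show ?thesis by (simp add: cM_pow)
  qed
  ultimately show ?thesis by simp
qed



lemma sc: "(r::real) *\<^sub>R (c::complex) = complex_of_real r * c" by (simp add: scaleR_conv_of_real)

lemma mv_bl: "bounded_linear (\<lambda>x::complex^'m. (X::complex^'m^'n) *v x)"
proof -
  have "linear (\<lambda>x::complex^'m. X *v x)"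
    by (intro linearI) (simp_all add: mv_add ofreal_smult[symmetric] mv_smult)
  then show ?thesis using linear_conv_bounded_linear by blast
qed

lemma sv_bl: "bounded_linear (\<lambda>c::complex. c *s (u::complex^'n))"
proof -
  have "linear (\<lambda>c::complex. c *s u)"
    by (intro linearI) (simp_all add: vec_eq_iff algebra_simps sc)
  then show ?thesis using linear_conv_bounded_linear by blast
qed

lemma F1: "cM (Ad A T) *v (cM A *v y) = cM A *v (cM (Ad A T) *v y)"
proof -
  have "(\<lambda>k. (T^k / fact k) *\<^sub>R (((*v) (cM A)) ^^ k) (cM A *v y)) sums (cM (Ad A T) *v (cM A *v y))"
    by (rule SE)
  moreover have "(\<lambda>k. cM A *v ((T^k / fact k) *\<^sub>R (((*v) (cM A)) ^^ k) y)) sums (cM A *v (cM (Ad A T) *v y))"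
    by (rule bounded_linear.sums[OF mv_bl SE])
  moreover have "cM A *v ((T^k / fact k) *\<^sub>R (((*v) (cM A)) ^^ k) y) = (T^k / fact k) *\<^sub>R (((*v) (cM A)) ^^ k) (cM A *v y)" for k
    by (simp add: ofreal_smult[symmetric] mv_smult funpow_swap1)
  ultimately show ?thesis using sums_unique2 by (metis (no_types, lifting) sums_cong)
qed

lemma powv_eig: "cM A *v u = r *s u \<Longrightarrow> (((*v) (cM A)) ^^ k) u = r^k *s u"
  by (induction k) (simp_all add: mv_smult vector_smult_assoc mult.commute)

lemma F2:
  assumes "cM A *v u = r *s u"
  shows "cM (Ad A T) *v u = exp (r * complex_of_real T) *s u"
proof -
  have "(\<lambda>k. ((r * complex_of_real T)^k /\<^sub>R fact k) *s u) sums (exp (r * complex_of_real T) *s u)"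
    by (rule bounded_linear.sums[OF sv_bl exp_converges])
  moreover have "(T^k / fact k) *\<^sub>R (((*v) (cM A)) ^^ k) u = ((r * complex_of_real T)^k /\<^sub>R fact k) *s u" for k
    by (simp add: powv_eig[OF assms] vec_eq_iff sc power_mult_distrib field_simps)
  ultimately show ?thesis using SE[of T A u] sums_unique2 by (metis (no_types, lifting) sums_cong)
qed

lemma F3:
  assumes x: "x = cM A *v y - r *s y" and Mx: "cM A *v x = r *s x"
  shows "cM (Ad A T) *v y = exp (r * complex_of_real T) *s y + (complex_of_real T * exp (r * complex_of_real T)) *s x"
proof -
  have My: "cM A *v y = x + r *s y" using x by simp
  have pw: "(((*v) (cM A)) ^^ k) y = r^k *s y + (of_nat k * r^(k-1)) *s x" for k
  proof (induction k)
    case 0 then show ?case by simp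
  next
    case (Suc k)
    have e: "of_nat k * r^(k-1) * r = of_nat k * r^k" by (cases k) auto
    have "(((*v) (cM A)) ^^ Suc k) y = r^k *s (x + r *s y) + (of_nat k * r^(k-1)) *s (r *s x)"
      using Suc by (simp add: mv_add mv_smult My Mx)
    also have "\<dots> = r^(Suc k) *s y + (of_nat (Suc k) * r^(Suc k - 1)) *s x"
      by (simp add: vec_eq_iff algebra_simps) (cases k; simp)
    finally show ?case .
  qed
  define f where "f k = complex_of_real (T^k / fact k) * (of_nat k * r^(k-1))" for k
  have "(\<lambda>j. f (Suc j)) sums (complex_of_real T * exp (r * complex_of_real T))"
  proof -
    have "(\<lambda>j. complex_of_real T * ((r * complex_of_real T)^j /\<^sub>R fact j)) sums (complex_of_real T * exp (r * complex_of_real T))"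
      by (intro sums_mult exp_converges)
    moreover have "f (Suc j) = complex_of_real T * ((r * complex_of_real T)^j /\<^sub>R fact j)" for j
    proof -
      have re: "T^(Suc j) / fact (Suc j) * real (Suc j) = T * (T^j / fact j)"
        by (simp add: fact_Suc field_simps del: of_nat_Suc)
      have "f (Suc j) = complex_of_real (T^(Suc j) / fact (Suc j) * real (Suc j)) * r^j"
        by (simp add: f_def del: of_nat_Suc)
      also have "\<dots> = complex_of_real (T * (T^j / fact j)) * r^j" by (simp only: re)
      also have "\<dots> = complex_of_real T * ((r * complex_of_real T)^j /\<^sub>R fact j)"
        by (simp add: sc power_mult_distrib mult_ac divide_inverse)
      finally show ?thesis .
    qed
    ultimately show ?thesis by simp
  qed
  then have fs: "f sums (complex_of_real T * exp (r * complex_of_real T))"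
    by (subst (asm) sums_Suc_iff) (simp add: f_def)
  have "(\<lambda>k. ((r * complex_of_real T)^k /\<^sub>R fact k) *s y + f k *s x) sums
          (exp (r * complex_of_real T) *s y + (complex_of_real T * exp (r * complex_of_real T)) *s x)"
    by (intro sums_add bounded_linear.sums[OF sv_bl] exp_converges fs)
  moreover have "(T^k / fact k) *\<^sub>R (((*v) (cM A)) ^^ k) y = ((r * complex_of_real T)^k /\<^sub>R fact k) *s y + f k *s x" for k
    by (simp add: pw f_def vec_eq_iff sc power_mult_distrib field_simps)
  ultimately show ?thesis using SE[of T A y] sums_unique2 by (metis (no_types, lifting) sums_cong)
qed



lemma left_spec:
  assumes "cM A *v u = r *s u" "u \<noteq> 0"
  shows "r \<in> spec A"
proof -
  have "(cM A - mat r) *v u = 0" using assms(1) by (simp add: mv_minus_mat)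
  then have "\<not> inj ((*v) (cM A - mat r))" using assms(2) mv_zero
    by (metis injD)
  then have "det (cM A - mat r) = 0"
    using det_nz_iff_inj_gen[of "(*v) (cM A - mat r)"] by simp
  moreover have "transpose (cM A - mat r) = cmat A - mat r"
    by (simp add: cM_def transpose_def mat_def vec_eq_iff)
  ultimately have "det (cmat A - mat r) = 0" by (metis det_transpose)
  then have "\<not> inj ((*v) (cmat A - mat r))"
    using det_nz_iff_inj_gen[of "(*v) (cmat A - mat r)"] by simp
  then obtain v1 v2 where "v1 \<noteq> v2" "(cmat A - mat r) *v v1 = (cmat A - mat r) *v v2"
    by (auto simp: inj_def)
  then have "v1 - v2 \<noteq> 0" "(cmat A - mat r) *v (v1 - v2) = 0" by (auto simp: mv_diff)
  then have "cmat A *v (v1 - v2) = r *s (v1 - v2)" "v1 - v2 \<noteq> 0"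
    by (simp_all add: mv_minus_mat)
  then show ?thesis unfolding spec_def by blast
qed

definition pr :: "complex^'n \<Rightarrow> real^'n \<Rightarrow> complex" where
  "pr v w = (\<Sum>i\<in>UNIV. v$i * complex_of_real (w$i))"

lemma pr_mv: "pr v ((X::real^'m^'n) *v w) = pr (cM X *v v) w"
proof -
  have "pr v (X *v w) = (\<Sum>i\<in>UNIV. \<Sum>j\<in>UNIV. v$i * complex_of_real (X$i$j) * complex_of_real (w$j))"
    by (simp add: pr_def matrix_vector_mult_def sum_distrib_left mult_ac)
  also have "\<dots> = (\<Sum>j\<in>UNIV. \<Sum>i\<in>UNIV. v$i * complex_of_real (X$i$j) * complex_of_real (w$j))"
    by (rule sum.swap)
  also have "\<dots> = pr (cM X *v v) w"
    by (simp add: pr_def cMv sum_distrib_right sum_distrib_left mult_ac)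
  finally show ?thesis .
qed

lemma pr_smult: "pr (c *s v) w = c * pr v w"
  by (simp add: pr_def sum_distrib_left mult_ac)

lemma pr_add_left: "pr (v + v') w = pr v w + pr v' w"
  by (simp add: pr_def sum.distrib distrib_right)

lemma pr_zero_left: "pr 0 w = 0"
  by (simp add: pr_def)

lemma pr_axis: "pr v (axis i 1) = v$i"
proof -
  have "pr v (axis i 1) = (\<Sum>j\<in>UNIV. if i = j then v$j else 0)"
    unfolding pr_def by (intro sum.cong) (auto simp: axis_def)
  then show ?thesis by simp
qed

lemma pr_allzero: "(\<And>w. pr v w = 0) \<Longrightarrow> v = 0"
  by (metis pr_axis vec_eq_iff zero_index)

lemma pr_span:
  assumes "\<And>w. w \<in> S \<Longrightarrow> pr v w = 0" "x \<in> span S"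
  shows "pr v x = 0"
proof -
  have "subspace {w. pr v w = 0}"
    by (auto simp: subspace_def pr_def sum.distrib distrib_left
        sum_distrib_left[symmetric] mult_ac)
  then have "span S \<subseteq> {w. pr v w = 0}" using assms(1) by (intro span_minimal) auto
  then show ?thesis using assms(2) by auto
qed

lemma pr_UNIV:
  assumes "\<And>w. w \<in> S \<Longrightarrow> pr v w = 0" "span S = UNIV"
  shows "v = 0"
  using pr_span[OF assms(1)] assms(2) pr_allzero by blast

definition cvec :: "real^'n \<Rightarrow> complex^'n" where
  "cvec x = (\<chi> i. complex_of_real (x$i))"

lemma pr_cvec: "pr (cvec x) w = complex_of_real (x \<bullet> w)"
  by (simp add: pr_def cvec_def inner_vec_def)

lemma cvec_nz: "x \<noteq> 0 \<Longrightarrow> cvec x \<noteq> 0"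
  by (auto simp: cvec_def vec_eq_iff)

lemma hcat_mv: "hcat B1 B2 *v u = B1 *v (\<chi> a. u $ Inl a) + B2 *v (\<chi> b. u $ Inr b)"
proof -
  have "(hcat B1 B2 *v u) $ i = (B1 *v (\<chi> a. u $ Inl a) + B2 *v (\<chi> b. u $ Inr b)) $ i" for i
  proof -
    have "(hcat B1 B2 *v u) $ i = (\<Sum>j\<in>UNIV <+> UNIV. hcat B1 B2 $ i $ j * u $ j)"
      by (simp add: matrix_vector_mult_def)
    also have "\<dots> = (B1 *v (\<chi> a. u $ Inl a) + B2 *v (\<chi> b. u $ Inr b)) $ i"
      by (subst sum.Plus) (simp_all add: hcat_def matrix_vector_mult_def o_def)
    finally show ?thesis .
  qed
  then show ?thesis by (simp add: vec_eq_iff)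
qed

lemma hcat_l: "hcat B1 B2 *v (\<chi> j. case j of Inl a \<Rightarrow> x$a | Inr b \<Rightarrow> 0) = B1 *v x"
  by (simp add: hcat_mv mv_zero[unfolded zero_vec_def] zero_vec_def[symmetric])

lemma hcat_r: "hcat B1 B2 *v (\<chi> j. case j of Inl a \<Rightarrow> 0 | Inr b \<Rightarrow> x$b) = B2 *v x"
  by (simp add: hcat_mv mv_zero[unfolded zero_vec_def] zero_vec_def[symmetric])

lemma vcat_zero: "vcat X Y *v v = 0 \<longleftrightarrow> X *v v = 0 \<and> Y *v v = 0"
proof -
  have l: "(vcat X Y *v v) $ Inl a = (X *v v) $ a" for a
    by (simp add: vcat_def matrix_vector_mult_def)
  have r: "(vcat X Y *v v) $ Inr b = (Y *v v) $ b" for b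
    by (simp add: vcat_def matrix_vector_mult_def)
  show ?thesis
    by (auto simp: vec_eq_iff l[symmetric] r[symmetric]) (metis sum.exhaust l r)
qed



definition gen :: "real^'n^'n \<Rightarrow> real^'p^'n \<Rightarrow> nat \<Rightarrow> (real^'n) set" where
  "gen X H j = {matpow X k *v (H *v u) | k u. k < j}"

lemma mvR: "(X::real^'m^'n) *v (c *\<^sub>R x) = c *\<^sub>R (X *v x)"
  by (metis scalar_mult_eq_scaleR mv_smult)

lemma gen_mono: "j \<le> j' \<Longrightarrow> span (gen X H j) \<subseteq> span (gen X H j')"
  by (intro span_mono) (auto simp: gen_def)

lemma gen_step_image:
  assumes "w \<in> span (gen X H j)"
  shows "X *v w \<in> span (gen X H (Suc j))"
proof -
  have "subspace {w. X *v w \<in> span (gen X H (Suc j))}"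
    by (auto simp: subspace_def mv_add mv_zero span_zero span_add mvR span_scale)
  moreover have "gen X H j \<subseteq> {w. X *v w \<in> span (gen X H (Suc j))}"
  proof
    fix w assume "w \<in> gen X H j"
    then obtain k u where "w = matpow X k *v (H *v u)" "k < j" by (auto simp: gen_def)
    then have "X *v w = matpow X (Suc k) *v (H *v u)" "Suc k < Suc j"
      by (simp_all add: matrix_vector_mul_assoc matrix_mul_assoc)
    then have "X *v w \<in> gen X H (Suc j)" unfolding gen_def by blast
    then show "w \<in> {w. X *v w \<in> span (gen X H (Suc j))}"
      by (simp add: span_base)
  qed
  ultimately show ?thesis using span_minimal assms by blast
qed

lemma gen_stable_step:
  assumes "span (gen X H (Suc j)) \<subseteq> span (gen X H j)"
  shows "span (gen X H (Suc (Suc j))) \<subseteq> span (gen X H (Suc j))"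
proof (rule span_minimal)
  show "gen X H (Suc (Suc j)) \<subseteq> span (gen X H (Suc j))"
  proof
    fix w assume "w \<in> gen X H (Suc (Suc j))"
    then obtain k u where w: "w = matpow X k *v (H *v u)" "k < Suc (Suc j)" by (auto simp: gen_def)
    show "w \<in> span (gen X H (Suc j))"
    proof (cases "k < Suc j")
      case True then show ?thesis using w by (auto simp: gen_def intro!: span_base)
    next
      case False
      then have k: "k = Suc j" using w by simp
      have "matpow X j *v (H *v u) \<in> span (gen X H (Suc j))"
        by (auto simp: gen_def intro!: span_base)
      then have "matpow X j *v (H *v u) \<in> span (gen X H j)" using assms by blast
      then have "X *v (matpow X j *v (H *v u)) \<in> span (gen X H (Suc j))" by (rule gen_step_image)
      then show ?thesis using w k by (simp add: matrix_vector_mul_assoc matrix_mul_assoc)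
    qed
  qed
qed simp

lemma gen_stable:
  assumes "span (gen X H (Suc j)) \<subseteq> span (gen X H j)"
  shows "span (gen X H (j + d)) \<subseteq> span (gen X H j)"
proof -
  have st: "span (gen X H (Suc (j + d))) \<subseteq> span (gen X H (j + d))" for d
  proof (induction d)
    case 0 then show ?case using assms by simp
  next
    case (Suc d) then show ?case using gen_stable_step by (metis add_Suc_right)
  qed
  show ?thesis
  proof (induction d)
    case 0 then show ?case by simp
  next
    case (Suc d) then show ?case using st[of d] by (metis add_Suc_right order_trans)
  qed
qed

lemma kal_stab:
  fixes X :: "real^'n^'n" and H :: "real^'p^'n"
  shows "matpow X k *v (H *v u) \<in> span (gen X H CARD('n))"
proof (cases "\<exists>j<CARD('n). span (gen X H (Suc j)) \<subseteq> span (gen X H j)")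
  case True
  then obtain j where j: "j < CARD('n)" "span (gen X H (Suc j)) \<subseteq> span (gen X H j)" by blast
  have "matpow X k *v (H *v u) \<in> span (gen X H (j + Suc k))"
    by (auto simp: gen_def intro!: span_base)
  then have "matpow X k *v (H *v u) \<in> span (gen X H j)" using gen_stable[OF j(2)] by blast
  then show ?thesis using gen_mono[of j "CARD('n)" X H] j(1) by auto
next
  case False
  have "j \<le> CARD('n) \<Longrightarrow> j \<le> dim (gen X H j)" for j
  proof (induction j)
    case 0 then show ?case by simp
  next
    case (Suc j)
    have "\<not> span (gen X H (Suc j)) \<subseteq> span (gen X H j)" using False Suc.prems by auto
    then have "span (gen X H j) \<subset> span (gen X H (Suc j))"
      using gen_mono[of j "Suc j" X H] by auto
    then have "dim (gen X H j) < dim (gen X H (Suc j))" by (rule dim_psubset)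
    then show ?case using Suc by simp
  qed
  then have "CARD('n) \<le> dim (gen X H CARD('n))" by simp
  moreover have "dim (gen X H CARD('n)) \<le> CARD('n)" by (rule dim_subset_UNIV_cart)
  ultimately have "dim (gen X H CARD('n)) = DIM(real^'n)" by simp
  then have "span (gen X H CARD('n)) = UNIV" by (simp only: dim_eq_full)
  then show ?thesis by simp
qed



lemma pr_add_right: "pr v (x + y) = pr v x + pr v y"
  by (simp add: pr_def sum.distrib distrib_left)

lemma noncontrol_A:
  fixes A :: "real^'n^'n"
  assumes "controllable A B" "cM A *v v = r *s v" "cM B *v v = 0"
  shows "v = 0"
proof (rule pr_UNIV)
  show "span {matpow A k *v (B *v u) | k u. k < CARD('n)} = UNIV"
    using assms(1) unfolding controllable_def .
  fix w assume "w \<in> {matpow A k *v (B *v u) | k u. k < CARD('n)}"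
  then obtain k u where w: "w = matpow A k *v (B *v u)" by blast
  have "pr v w = pr ((((*v) (cM A)) ^^ k) v) (B *v u)" by (simp add: w pr_mv cM_pow)
  also have "\<dots> = r^k * pr (cM B *v v) u" by (simp add: powv_eig[OF assms(2)] pr_smult pr_mv mv_smult)
  also have "\<dots> = 0" by (simp add: assms(3) pr_zero_left)
  finally show "pr v w = 0" .
qed

lemma kernel_iff:
  "vcat (transpose (cmat (Ad A T)) - mat c) (vcat (transpose (cmat (Atil A T ** B))) (transpose (cmat B))) *v v = 0
   \<longleftrightarrow> cM (Ad A T) *v v = c *s v \<and> cM (Bd A B T) *v v = 0 \<and> cM B *v v = 0"
  by (simp add: vcat_zero mv_minus_mat cM_def[symmetric] Bd_def)

lemma dir1:
  fixes A :: "real^'n^'n"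
  assumes "controllable (Ad A T) (hcat (Bd A B T) (Bi A B T))"
    and "cM (Ad A T) *v v = z *s v" "cM (Bd A B T) *v v = 0" "cM B *v v = 0"
  shows "v = 0"
proof (rule pr_UNIV)
  let ?H = "hcat (Bd A B T) (Bi A B T)"
  show "span {matpow (Ad A T) k *v (?H *v u) | k u. k < CARD('n)} = UNIV"
    using assms(1) unfolding controllable_def .
  fix w assume "w \<in> {matpow (Ad A T) k *v (?H *v u) | k u. k < CARD('n)}"
  then obtain k u where w: "w = matpow (Ad A T) k *v (?H *v u)" by blast
  have "pr v w = z^k * pr v (?H *v u)"
    by (simp add: w pr_mv cM_pow powv_eig[OF assms(2)] pr_smult mv_smult)
  also have "pr v (?H *v u) = 0"
  proof -
    have "pr v (Bd A B T *v (\<chi> a. u $ Inl a)) = 0" by (simp add: pr_mv assms(3) pr_zero_left)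
    moreover have "pr v (Bi A B T *v (\<chi> b. u $ Inr b)) = 0"
      by (simp add: Bi_def matrix_vector_mul_assoc[symmetric] pr_mv assms(2,4) pr_smult pr_zero_left mv_smult mv_zero)
    ultimately show ?thesis by (simp add: hcat_mv pr_add_right)
  qed
  finally show "pr v w = 0" by simp
qed

lemma Y_closed:
  fixes A :: "real^'n^'n" and T :: real and z :: complex and Y
  defines "Y \<equiv> {y. cM (Ad A T) *v y = z *s y}"
  shows "0 \<in> Y" "\<And>x y. x\<in>Y \<Longrightarrow> y\<in>Y \<Longrightarrow> x+y\<in>Y" "\<And>c x. x\<in>Y \<Longrightarrow> c *s x \<in> Y"
    "\<And>x. x\<in>Y \<Longrightarrow> cM A *v x \<in> Y" "\<And>x y. x\<in>Y \<Longrightarrow> y\<in>Y \<Longrightarrow> x-y\<in>Y"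
  unfolding Y_def
  by (auto simp: mv_add mv_zero mv_smult mv_diff F1 vector_sadd_rdistrib vector_smult_assoc
      vector_ssub_ldistrib mult.commute)

lemma lemL:
  fixes A :: "real^'n^'n"
  assumes T: "T \<noteq> 0" and r: "r \<in> spec A"
    and notS: "\<not> (\<exists>l::int. \<exists>\<gamma> \<in> spec A - {r}.
                 (r - \<gamma>) * complex_of_real T = 2 * \<i> * complex_of_real pi * of_int l)"
    and v: "cM (Ad A T) *v v = exp (r * complex_of_real T) *s v"
  shows "cM A *v v = r *s v"
proof -
  define Y where "Y = {y. cM (Ad A T) *v y = exp (r * complex_of_real T) *s y}"
  note YC = Y_closed[where A=A and T=T and z="exp (r * complex_of_real T)", folded Y_def]
  define N where "N y = cM A *v y - r *s y" for y
  have NY: "N y \<in> Y" if "y \<in> Y" for y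
    unfolding N_def using that YC by blast
  have "\<forall>y\<in>Y. N y = 0"
  proof (rule ccontr)
    assume "\<not> (\<forall>y\<in>Y. N y = 0)"
    then obtain y0 where y0: "y0 \<in> Y" "N y0 \<noteq> 0" by blast
    have "\<exists>u\<in>N ` Y. u \<noteq> 0 \<and> (\<exists>c. cM A *v u = c *s u)"
    proof (rule eig_exists)
      show "N y0 \<in> N ` Y" "N y0 \<noteq> 0" using y0 by auto
      show "0 \<in> N ` Y" using YC(1) by (auto simp: N_def mv_zero intro!: image_eqI[of _ _ 0])
      show "x + y \<in> N ` Y" if xy: "x \<in> N ` Y" "y \<in> N ` Y" for x y
      proof -
        obtain a b where "a \<in> Y" "b \<in> Y" "x = N a" "y = N b" using xy by blast
        then show ?thesis using YC(2)
          by (auto simp: N_def mv_add algebra_simps vector_sadd_rdistrib vector_add_ldistrib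
              intro!: image_eqI[of _ _ "a + b"])
      qed
      show "c *s x \<in> N ` Y" if xx: "x \<in> N ` Y" for c x
      proof -
        obtain a where "a \<in> Y" "x = N a" using xx by blast
        then show ?thesis using YC(3)
          by (auto simp: N_def mv_smult vector_ssub_ldistrib vector_smult_assoc mult.commute
              intro!: image_eqI[of _ _ "c *s a"])
      qed
      show "cM A *v x \<in> N ` Y" if xx: "x \<in> N ` Y" for x
      proof -
        obtain a where "a \<in> Y" "x = N a" using xx by blast
        then show ?thesis using YC(4)
          by (auto simp: N_def mv_diff mv_smult intro!: image_eqI[of _ _ "cM A *v a"])
      qed
    qed
    then obtain y c where y: "y \<in> Y" "N y \<noteq> 0" "cM A *v N y = c *s N y" by blast
    have "cM (Ad A T) *v N y = exp (c * complex_of_real T) *s N y" by (rule F2[OF y(3)])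
    moreover have "cM (Ad A T) *v N y = exp (r * complex_of_real T) *s N y"
      using NY[OF y(1)] by (simp add: Y_def)
    ultimately have ee: "exp (c * complex_of_real T) = exp (r * complex_of_real T)"
      using y(2) smult_cancel_vec by metis
    have cs: "c \<in> spec A" using left_spec[OF y(3) y(2)] .
    have "c = r"
    proof (rule ccontr)
      assume "c \<noteq> r"
      obtain n :: int where n: "c * complex_of_real T = r * complex_of_real T + (of_int (2 * n) * pi) * \<i>"
        using ee exp_eq by blast
      have "(r - c) * complex_of_real T = 2 * \<i> * complex_of_real pi * of_int (- n)"
        using n by (simp add: algebra_simps)
      then show False using notS cs \<open>c \<noteq> r\<close> by blast
    qed
    have "cM (Ad A T) *v y = exp (r * complex_of_real T) *s y + (complex_of_real T * exp (r * complex_of_real T)) *s N y"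
      by (rule F3[OF N_def y(3)[unfolded \<open>c = r\<close>]])
    moreover have "cM (Ad A T) *v y = exp (r * complex_of_real T) *s y" using y(1) by (simp add: Y_def)
    ultimately have "(complex_of_real T * exp (r * complex_of_real T)) *s N y = 0" by simp
    then have "N y = 0" using T by (simp add: vec_eq_iff)
    then show False using y(2) by simp
  qed
  moreover have "v \<in> Y" using v by (simp add: Y_def)
  ultimately show ?thesis by (simp add: N_def)
qed



theorem theorem1:
  fixes A :: "real^'n^'n" and B :: "real^'m^'n" and T :: real
  assumes "controllable A B" and "T > 0"
  shows "controllable (Ad A T) (hcat (Bd A B T) (Bi A B T)) \<longleftrightarrow>
    (\<forall>\<mu> \<in> {c \<in> spec A. \<exists>l::int. \<exists>\<gamma> \<in> spec A - {c}.
                 (c - \<gamma>) * complex_of_real T = 2 * \<i> * complex_of_real pi * of_int l}.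
       {v :: complex^'n.
          vcat (transpose (cmat (Ad A T)) - mat (exp (\<mu> * complex_of_real T)))
               (vcat (transpose (cmat (Atil A T ** B))) (transpose (cmat B))) *v v = 0}
       = {0})"
  (is "?C \<longleftrightarrow> (\<forall>\<mu>\<in>?S. ?K \<mu> = {0})")
proof
  assume C: ?C
  show "\<forall>\<mu>\<in>?S. ?K \<mu> = {0}"
  proof (intro ballI set_eqI iffI)
    fix \<mu> v assume "v \<in> ?K \<mu>"
    then show "v \<in> {0}" using dir1[OF C] by (auto simp: kernel_iff)
  next
    fix \<mu> v assume "v \<in> {0::complex^'n}"
    then show "v \<in> ?K \<mu>" by (simp add: mv_zero)
  qed
next
  assume Hyp: "\<forall>\<mu>\<in>?S. ?K \<mu> = {0}"
  let ?H = "hcat (Bd A B T) (Bi A B T)"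
  let ?E = "cM (Ad A T)"
  let ?G = "{matpow (Ad A T) k *v (?H *v u) | k u. k < CARD('n)}"
  show ?C unfolding controllable_def
  proof (rule ccontr)
    assume NC: "span ?G \<noteq> UNIV"
    have "dim ?G \<le> CARD('n)" by (rule dim_subset_UNIV_cart)
    moreover have "dim ?G \<noteq> DIM(real^'n)" using NC dim_eq_full by blast
    ultimately have dlt: "dim ?G < DIM(real^'n)" by simp
    obtain x where x: "x \<noteq> 0" "\<And>y. y \<in> span ?G \<Longrightarrow> orthogonal x y"
      using orthogonal_to_subspace_exists[OF dlt] by blast
    define U where "U = {v. \<forall>k u. pr v (matpow (Ad A T) k *v (?H *v u)) = 0}"
    have xU: "cvec x \<in> U"
    proof -
      have "pr (cvec x) (matpow (Ad A T) k *v (?H *v u)) = 0" for k u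
      proof -
        have "matpow (Ad A T) k *v (?H *v u) \<in> span ?G"
          using kal_stab[of "Ad A T" k ?H u] by (simp add: gen_def)
        then show ?thesis using x(2) by (simp add: pr_cvec orthogonal_def)
      qed
      then show ?thesis by (simp add: U_def)
    qed
    have "\<exists>v\<in>U. v \<noteq> 0 \<and> (\<exists>c. ?E *v v = c *s v)"
    proof (rule eig_exists[OF xU cvec_nz[OF x(1)]])
      show "0 \<in> U" by (simp add: U_def pr_zero_left)
      show "\<And>a b. a \<in> U \<Longrightarrow> b \<in> U \<Longrightarrow> a + b \<in> U" by (simp add: U_def pr_add_left)
      show "\<And>c a. a \<in> U \<Longrightarrow> c *s a \<in> U" by (simp add: U_def pr_smult)
      show "?E *v a \<in> U" if aU: "a \<in> U" for a
      proof -
        have "pr (?E *v a) (matpow (Ad A T) k *v (?H *v u)) = 0" for k u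
        proof -
          have eq: "pr (?E *v a) (matpow (Ad A T) k *v (?H *v u)) = pr a (matpow (Ad A T) (Suc k) *v (?H *v u))"
            by (simp add: pr_mv[symmetric] matrix_vector_mul_assoc matrix_mul_assoc)
          have h: "pr a (matpow (Ad A T) (Suc k) *v (?H *v u)) = 0"
            using aU unfolding U_def by blast
          show ?thesis by (rule trans[OF eq h])
        qed
        then show ?thesis by (simp add: U_def)
      qed
    qed
    then obtain v z where v: "v \<in> U" "v \<noteq> 0" "?E *v v = z *s v" by blast
    have pH: "pr v (?H *v u) = 0" for u
    proof -
      have "pr v (matpow (Ad A T) 0 *v (?H *v u)) = 0" using v(1) unfolding U_def by blast
      then show ?thesis by (simp add: matrix_vector_mul_lid)
    qed
    have Bd0: "cM (Bd A B T) *v v = 0"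
    proof (rule pr_allzero)
      fix w show "pr (cM (Bd A B T) *v v) w = 0"
        using pH[of "\<chi> j. case j of Inl a \<Rightarrow> w$a | Inr b \<Rightarrow> 0"] by (simp add: hcat_l pr_mv)
    qed
    have pBi: "z * pr (cM B *v v) w = 0" for w
    proof -
      have "pr v (Bi A B T *v w) = 0"
        using pH[of "\<chi> j. case j of Inl a \<Rightarrow> 0 | Inr b \<Rightarrow> w$b"] by (simp add: hcat_r)
      then show ?thesis
        by (simp add: Bi_def matrix_vector_mul_assoc[symmetric] pr_mv v(3) pr_smult mv_smult)
    qed
    \<comment> \<open>spectral mapping: z = exp (c T) for an eigenvalue c\<close>
    define Y where "Y = {y. ?E *v y = z *s y}"
    note YC = Y_closed[where A=A and T=T and z=z, folded Y_def]
    have vY: "v \<in> Y" using v(3) by (simp add: Y_def)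
    have "\<exists>u\<in>Y. u \<noteq> 0 \<and> (\<exists>c. cM A *v u = c *s u)"
      by (rule eig_exists[OF vY v(2) YC(1) YC(2) YC(3) YC(4)])
    then obtain u c where u: "u \<in> Y" "u \<noteq> 0" "cM A *v u = c *s u" by blast
    have "?E *v u = exp (c * complex_of_real T) *s u" by (rule F2[OF u(3)])
    moreover have "?E *v u = z *s u" using u(1) by (simp add: Y_def)
    ultimately have "z *s u = exp (c * complex_of_real T) *s u" by simp
    then have zc: "z = exp (c * complex_of_real T)" by (rule smult_cancel_vec[OF _ u(2)])
    have cs: "c \<in> spec A" by (rule left_spec[OF u(3) u(2)])
    have z0: "z \<noteq> 0" using zc by simp
    have B0: "cM B *v v = 0"
    proof (rule pr_allzero)
      fix w show "pr (cM B *v v) w = 0" using pBi[of w] z0 by simp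
    qed
    have vK: "v \<in> ?K c"
      using v(3) Bd0 B0 zc by (simp add: kernel_iff)
    show False
    proof (cases "c \<in> ?S")
      case True
      then show False using Hyp vK v(2) by blast
    next
      case False
      then have notS: "\<not> (\<exists>l::int. \<exists>\<gamma> \<in> spec A - {c}.
                 (c - \<gamma>) * complex_of_real T = 2 * \<i> * complex_of_real pi * of_int l)"
        using cs by blast
      have "cM A *v v = c *s v"
      proof (rule lemL[OF _ cs notS])
        show "T \<noteq> 0" using assms(2) by simp
        show "?E *v v = exp (c * complex_of_real T) *s v" using v(3) unfolding zc .
      qed
      then have "v = 0" by (rule noncontrol_A[OF assms(1) _ B0])
      then show False using v(2) by simp
    qed
  qed
qed


end
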